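(* Let $\mathbf{A}\in\mathbb{R}^{n\times n}$ be symmetric positive semidefinite with $\mathbf{1}^{\intercal}\mathbf{A}=\mathbf{0}^{\intercal}$, and let $\mathbf{x}\in\{-1,1\}^n$. Set $M=\frac14\mathbf{x}^{\intercal}\mathbf{A}\mathbf{x}$ and $S=\{i\in\{1,\dots,n\}:\mathbf{x}_i=1\}$, and assume $S\neq\emptyset$. Then there exists $i\in S$ such that, letting $\mathbf{x}'$ be $\mathbf{x}$ with its $i$-th entry changed to $-1$, we have $M-\frac14\mathbf{x}'^{\intercal}\mathbf{A}\mathbf{x}'\le\frac{2M}{|S|}$.
   Context: $\mathbf{1}$ is the all-ones vector and $\mathbf{0}$ the all-zeros vector. *)

theory Defs
  imports "HOL-Analysis.Analysis"
begin

end

theory Submission imports Defs begin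

lemma quad_expand:
  fixes A :: "real ^ 'n ^ 'n" and x e :: "real ^ 'n"
  assumes sym: "transpose A = A"
  shows "(x - 2 *\<^sub>R e) \<bullet> (A *v (x - 2 *\<^sub>R e)) = x \<bullet> (A *v x) - 4 * (e \<bullet> (A *v x)) + 4 * (e \<bullet> (A *v e))"
proof -
  have s: "x \<bullet> (A *v e) = e \<bullet> (A *v x)"
    by (metis dot_lmul_matrix inner_commute sym vector_transpose_matrix)
  have "(x - 2 *\<^sub>R e) \<bullet> (A *v (x - 2 *\<^sub>R e)) = x \<bullet> (A *v x) - 2 * (x \<bullet> (A *v e)) - 2 * (e \<bullet> (A *v x)) + 4 * (e \<bullet> (A *v e))"
    by (simp add: inner_diff_left inner_diff_right algebra_simps matrix_vector_mult_scaleR)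
  then show ?thesis using s by simp
qed

lemma axis_inner_lem: "axis i 1 \<bullet> (v :: real ^ 'n) = v $ i"
  by (simp add: inner_commute[of "axis i 1"] inner_axis)

lemma axis_diag_lem: "((A :: real ^ 'n ^ 'n) *v axis i 1) $ i = A $ i $ i"
  by (simp add: matrix_vector_mult_def axis_def if_distrib[of "\<lambda>c. _ * c"] cong: if_cong)

theorem lemma3p6:
  fixes A :: "real ^ 'n ^ 'n" and x :: "real ^ 'n"
  assumes sym: "transpose A = A"
    and psd: "\<forall>v :: real ^ 'n. 0 \<le> v \<bullet> (A *v v)"
    and row0: "(1 :: real ^ 'n) v* A = 0"
    and pm1: "\<forall>i. x $ i = 1 \<or> x $ i = -1"
    and Sne: "{i. x $ i = 1} \<noteq> {}"
  shows "\<exists>i\<in>{i. x $ i = 1}.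
           (1/4) * (x \<bullet> (A *v x))
             - (1/4) * ((\<chi> j. if j = i then -1 else x $ j) \<bullet> (A *v (\<chi> j. if j = i then -1 else x $ j)))
           \<le> 2 * ((1/4) * (x \<bullet> (A *v x))) / real (card {i. x $ i = 1})"
proof (rule ccontr)
  define S where "S = {i. x $ i = 1}"
  define s :: "real ^ 'n" where "s = (\<chi> j. if x $ j = 1 then 1 else 0)"
  define M where "M = (1/4) * (x \<bullet> (A *v x))"
  define f where "f = (\<lambda>i. (A *v x) $ i - A $ i $ i)"
  have fin: "finite S" by simp
  have cpos: "card S > 0" using Sne fin unfolding S_def by (simp add: card_gt_0_iff)
  have A1: "A *v 1 = 0" using row0 sym by (metis vector_transpose_matrix)
  have xs: "x = 2 *\<^sub>R s - 1"
    unfolding vec_eq_iff s_def using pm1 by (auto split: if_splits)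
  have Ax: "A *v x = 2 *\<^sub>R (A *v s)"
    by (simp add: xs matrix_vector_mult_diff_distrib matrix_vector_mult_scaleR A1)
  have oAs: "1 \<bullet> (A *v s) = 0"
    by (metis dot_lmul_matrix row0 inner_zero_left)
  have Mq: "M = s \<bullet> (A *v s)"
    unfolding M_def Ax by (simp add: xs inner_diff_left oAs)
  have sumS: "(\<Sum>i\<in>S. (A *v x) $ i) = s \<bullet> (A *v x)"
    unfolding inner_vec_def s_def S_def
    by (simp add: sum.If_cases if_distrib[of "\<lambda>c. c * _"] cong: if_cong)
  have diag: "A $ i $ i \<ge> 0" for i
  proof -
    have "axis i 1 \<bullet> (A *v axis i 1) = A $ i $ i"
      by (simp add: axis_inner_lem axis_diag_lem)
    then show ?thesis using psd by metis
  qed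
  have sumf: "(\<Sum>i\<in>S. f i) \<le> 2 * M"
  proof -
    have "(\<Sum>i\<in>S. f i) \<le> (\<Sum>i\<in>S. (A *v x) $ i)"
      unfolding f_def by (rule sum_mono) (use diag in auto)
    also have "\<dots> = 2 * M" using sumS Mq Ax by simp
    finally show ?thesis .
  qed
  have D: "M - (1/4) * ((\<chi> j. if j = i then -1 else x $ j) \<bullet> (A *v (\<chi> j. if j = i then -1 else x $ j))) = f i"
    if "i \<in> S" for i
  proof -
    have e: "(\<chi> j. if j = i then -1 else x $ j) = x - 2 *\<^sub>R axis i 1"
      using that unfolding S_def vec_eq_iff by (auto simp: axis_def)
    have e1: "axis i 1 \<bullet> (A *v x) = (A *v x) $ i"
      by (simp add: inner_commute[of "axis i 1"] inner_axis)
    have e2: "axis i 1 \<bullet> (A *v axis i 1) = A $ i $ i"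
      by (simp add: axis_inner_lem axis_diag_lem)
    show ?thesis unfolding e quad_expand[OF sym] e1 e2 M_def f_def by (simp add: field_simps)
  qed
  assume H: "\<not> ?thesis"
  then have "\<forall>i\<in>S. f i > 2 * M / real (card S)"
    using D unfolding S_def M_def by (auto simp: not_le)
  then have "(\<Sum>i\<in>S. 2 * M / real (card S)) < (\<Sum>i\<in>S. f i)"
    using Sne fin S_def by (intro sum_strict_mono) auto
  then have "2 * M < (\<Sum>i\<in>S. f i)" using cpos by (simp split: if_splits)
  then show False using sumf by simp
qed

end
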